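(* For all integers $n\geq 1$, $$qq(n)+\sum_{j\geq1}(-1)^j\left(qq(n-2j(3j-1))+qq(n-2j(3j+1))\right)=\begin{cases}1,&\text{if $n$ is a triangular number},\\0,&\text{otherwise,}\end{cases}$$ i.e. $qq(n)-qq(n-4)-qq(n-8)+qq(n-20)+qq(n-28)-qq(n-48)-qq(n-60)+\cdots$ equals $1$ if $n$ is triangular and $0$ otherwise.
   Context: $qq(n)$ denotes the number of partitions of $n$ into distinct odd parts, with $qq(0)=1$ and $qq(m)=0$ for $m<0$. A triangular number is an integer of the form $k(k+1)/2$ with $k\ge0$. *)

theory Defs
  imports Main
begin

text \<open>qq m = number of partitions of m into distinct odd parts, i.e. the number of
  finite sets of odd positive integers whose sum is m; qq m = 0 for m < 0, qq 0 = 1.\<close>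
definition qq :: "int \<Rightarrow> nat" where
  "qq m = (if m < 0 then 0
           else card {S :: nat set. finite S \<and> (\<forall>k\<in>S. odd k) \<and> int (\<Sum>S) = m})"

definition triangular :: "int \<Rightarrow> bool" where
  "triangular n \<longleftrightarrow> (\<exists>k::nat. n = int (k * (k + 1) div 2))"

end

theory Submission
  imports Defs "HOL-Computational_Algebra.Formal_Power_Series"
begin

unbundle fps_syntax


fun T :: "nat \<Rightarrow> nat" where
  "T 0 = 0" | "T (Suc k) = T k + Suc k"

lemma T2: "2 * T k = k * (k + 1)"
  by (induction k) (auto simp: algebra_simps)

definition R :: "'a::comm_ring_1 \<Rightarrow> nat \<Rightarrow> nat \<Rightarrow> 'a" where
  "R x n k = (\<Prod>i\<in>{k<..n}. (1 - x ^ i))"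

definition S :: "'a::comm_ring_1 \<Rightarrow> nat \<Rightarrow> 'a" where
  "S x n = (\<Sum>k\<le>n. (-1) ^ k * x ^ (n * k + T k) * R x n k)"

definition pent :: "'a::comm_ring_1 \<Rightarrow> nat \<Rightarrow> 'a" where
  "pent x n = 1 + (\<Sum>j\<in>{1..n}. (-1) ^ j * (x ^ (j * j + T (j - 1)) + x ^ (j * j + T j)))"

lemma R_Suc: "k \<le> n \<Longrightarrow> R x (Suc n) k = R x n k * (1 - x ^ Suc n)"
proof -
  assume "k \<le> n"
  then have "{k<..Suc n} = insert (Suc n) {k<..n}" by auto
  then show ?thesis unfolding R_def by (simp add: mult.commute)
qed

lemma R_same: "R x n n = 1" unfolding R_def by simp

lemma R_step: "k < n \<Longrightarrow> (1 - x ^ Suc k) * R x n (Suc k) = R x n k"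
proof -
  assume "k < n"
  then have "{k<..n} = insert (Suc k) {Suc k<..n}" by auto
  then show ?thesis unfolding R_def by simp
qed

lemma S_Suc: "S x (Suc n) = S x n + (-1) ^ Suc n * (x ^ (Suc n * Suc n + T n) + x ^ (Suc n * Suc n + T (Suc n)))"
proof -
  define r where "r k = R x n k" for k
  define A where "A = (\<Sum>k<Suc n. (-1) ^ k * x ^ (n * k + T k) * ((1 - x ^ k) * r k))"
  define B where "B = (\<Sum>k<Suc n. (-1) ^ k * x ^ (Suc n * Suc k + T k) * r k)"
  define C where "C = (\<Sum>k<n. (-1) ^ k * x ^ (Suc n * Suc k + T k) * r k)"
  have Sn: "S x n = (\<Sum>k<Suc n. (-1) ^ k * x ^ (n * k + T k) * r k)"
    unfolding S_def r_def by (simp add: atMost_atLeast0 lessThan_Suc_atMost)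
  have "S x (Suc n) = (\<Sum>k<Suc n. (-1) ^ k * x ^ (Suc n * k + T k) * R x (Suc n) k)
      + (-1) ^ Suc n * x ^ (Suc n * Suc n + T (Suc n)) * R x (Suc n) (Suc n)"
    unfolding S_def by (simp add: lessThan_Suc_atMost[symmetric])
  also have "(\<Sum>k<Suc n. (-1) ^ k * x ^ (Suc n * k + T k) * R x (Suc n) k)
      = (\<Sum>k<Suc n. (-1) ^ k * x ^ (n * k + T k) * r k
          - (-1) ^ k * x ^ (n * k + T k) * ((1 - x ^ k) * r k)
          - (-1) ^ k * x ^ (Suc n * Suc k + T k) * r k)"
  proof (rule sum.cong[OF refl])
    fix k assume "k \<in> {..<Suc n}"
    then have "k \<le> n" by simp
    then have "R x (Suc n) k = r k * (1 - x ^ Suc n)" unfolding r_def by (rule R_Suc)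
    have e: "x ^ (Suc n * k + T k) * (1 - x ^ Suc n) =
        x ^ (n * k + T k) - x ^ (n * k + T k) * (1 - x ^ k) - x ^ (Suc n * Suc k + T k)"
      by (simp add: algebra_simps power_add)
    have "(-1) ^ k * x ^ (Suc n * k + T k) * R x (Suc n) k
        = (-1) ^ k * r k * (x ^ (Suc n * k + T k) * (1 - x ^ Suc n))"
      using \<open>R x (Suc n) k = r k * (1 - x ^ Suc n)\<close> by (simp only: ac_simps)
    also have "\<dots> = (-1) ^ k * r k * (x ^ (n * k + T k) - x ^ (n * k + T k) * (1 - x ^ k) - x ^ (Suc n * Suc k + T k))"
      by (simp only: e)
    finally show "(-1) ^ k * x ^ (Suc n * k + T k) * R x (Suc n) k =
      (-1) ^ k * x ^ (n * k + T k) * r k - (-1) ^ k * x ^ (n * k + T k) * ((1 - x ^ k) * r k)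
       - (-1) ^ k * x ^ (Suc n * Suc k + T k) * r k"
      by (simp only: right_diff_distrib left_diff_distrib ac_simps)
  qed
  also have "\<dots> = S x n - A - B" unfolding Sn A_def B_def by (simp add: sum_subtractf)
  finally have 1: "S x (Suc n) = S x n - A - B + (-1) ^ Suc n * x ^ (Suc n * Suc n + T (Suc n))"
    by (simp add: R_same)
  have "A = (\<Sum>k<n. (-1) ^ Suc k * x ^ (n * Suc k + T (Suc k)) * ((1 - x ^ Suc k) * r (Suc k)))"
    unfolding A_def by (subst sum.lessThan_Suc_shift) simp
  also have "\<dots> = - C" unfolding C_def sum_negf[symmetric]
  proof (rule sum.cong[OF refl])
    fix k assume "k \<in> {..<n}"
    then have "(1 - x ^ Suc k) * r (Suc k) = r k" using R_step r_def by auto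
    moreover have "n * Suc k + T (Suc k) = Suc n * Suc k + T k" by simp
    ultimately show "(-1) ^ Suc k * x ^ (n * Suc k + T (Suc k)) * ((1 - x ^ Suc k) * r (Suc k)) =
         - ((-1) ^ k * x ^ (Suc n * Suc k + T k) * r k)" by (simp only:) simp
  qed
  finally have 2: "A = - C" .
  have 3: "B = C + (-1) ^ n * x ^ (Suc n * Suc n + T n)"
    unfolding B_def C_def by (simp add: r_def R_same)
  show ?thesis using 1 2 3 by (simp add: algebra_simps)
qed

lemma shanks: "S x n = pent x n"
proof (induction n)
  case 0
  then show ?case by (simp add: S_def pent_def R_def)
next
  case (Suc n)
  have "pent x (Suc n) = pent x n + (-1) ^ Suc n * (x ^ (Suc n * Suc n + T n) + x ^ (Suc n * Suc n + T (Suc n)))"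
    unfolding pent_def by simp
  then show ?case using S_Suc[of x n] Suc.IH by simp
qed


fun qb :: "'a::comm_ring_1 \<Rightarrow> nat \<Rightarrow> nat \<Rightarrow> 'a" where
  "qb q n 0 = 1"
| "qb q 0 (Suc k) = 0"
| "qb q (Suc n) (Suc k) = qb q n k + q ^ Suc k * qb q n (Suc k)"

lemma qb_gt: "n < k \<Longrightarrow> qb q n k = 0"
proof (induction n arbitrary: k)
  case 0 then show ?case by (cases k) auto
next
  case (Suc n) then show ?case by (cases k) auto
qed

lemma qb_R: "qb q n k * (\<Prod>i<k. (1 - q ^ Suc i)) = (\<Prod>i<k. (1 - q ^ (n - i)))"
proof (induction n arbitrary: k)
  case 0
  then show ?case by (cases k) (auto simp: prod.lessThan_Suc_shift)
next
  case (Suc n)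
  show ?case
  proof (cases k)
    case 0 then show ?thesis by simp
  next
    case (Suc j)
    define Rn where "Rn = (\<Prod>i<j. (1 - q ^ (n - i)))"
    have rhs: "(\<Prod>i<Suc j. (1 - q ^ (Suc n - i))) = (1 - q ^ Suc n) * Rn"
      unfolding Rn_def by (subst prod.lessThan_Suc_shift) simp
    show ?thesis
    proof (cases "j \<le> n")
      case True
      have h1: "qb q n j * (\<Prod>i<j. (1 - q ^ Suc i)) = Rn" using Suc.IH Rn_def by simp
      have h2: "qb q n (Suc j) * (\<Prod>i<Suc j. (1 - q ^ Suc i)) = Rn * (1 - q ^ (n - j))"
        using Suc.IH[of "Suc j"] Rn_def by simp
      have "qb q (Suc n) (Suc j) * (\<Prod>i<Suc j. (1 - q ^ Suc i))
          = (qb q n j * (\<Prod>i<j. (1 - q ^ Suc i))) * (1 - q ^ Suc j)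
            + q ^ Suc j * (qb q n (Suc j) * (\<Prod>i<Suc j. (1 - q ^ Suc i)))"
        by (simp add: algebra_simps)
      also have "\<dots> = Rn * ((1 - q ^ Suc j) + q ^ Suc j * (1 - q ^ (n - j)))"
        by (simp only: h1 h2) (simp add: algebra_simps)
      also have "Suc j + (n - j) = Suc n" using True by simp
      then have "q ^ Suc j * q ^ (n - j) = q ^ Suc n"
        by (metis power_add)
      then have "(1 - q ^ Suc j) + q ^ Suc j * (1 - q ^ (n - j)) = 1 - q ^ Suc n"
        by (simp add: algebra_simps)
      finally show ?thesis using rhs \<open>k = Suc j\<close> by (simp add: mult.commute)
    next
      case False
      then have "qb q (Suc n) (Suc j) = 0" by (simp add: qb_gt)
      moreover have "(\<Prod>i<Suc j. (1 - q ^ (Suc n - i))) = 0"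
        using False by (intro prod_zero) (auto intro!: bexI[of _ "Suc n"])
      ultimately show ?thesis using \<open>k = Suc j\<close> by simp
    qed
  qed
qed

lemma T_pred_Suc: "T (Suc k - 1) = T (k - 1) + k"
  by (cases k) auto

lemma qbin_thm:
  "(\<Prod>m<n. (y + z * q ^ m)) = (\<Sum>k\<le>n. qb q n k * z ^ k * y ^ (n - k) * q ^ T (k - 1))"
proof (induction n arbitrary: z)
  case 0
  then show ?case by simp
next
  case (Suc n)
  have "(\<Prod>m<Suc n. (y + z * q ^ m)) = (y + z) * (\<Prod>m<n. (y + (z * q) * q ^ m))"
    by (subst prod.lessThan_Suc_shift) (simp add: mult.assoc)
  also have "\<dots> = (y + z) * (\<Sum>k\<le>n. qb q n k * (z * q) ^ k * y ^ (n - k) * q ^ T (k - 1))"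
    by (simp only: Suc.IH)
  also have "\<dots> = (\<Sum>k\<le>n. qb q n k * z ^ k * y ^ (Suc n - k) * q ^ (k + T (k - 1)))
       + (\<Sum>k\<le>n. qb q n k * z ^ Suc k * y ^ (n - k) * q ^ T k)"
  proof -
    have a: "y * (qb q n k * (z * q) ^ k * y ^ (n - k) * q ^ T (k - 1)) =
        qb q n k * z ^ k * y ^ (Suc n - k) * q ^ (k + T (k - 1))" if "k \<le> n" for k
    proof -
      have "Suc n - k = Suc (n - k)" using that by simp
      then show ?thesis by (simp add: power_add power_mult_distrib algebra_simps)
    qed
    have b: "z * (qb q n k * (z * q) ^ k * y ^ (n - k) * q ^ T (k - 1)) =
        qb q n k * z ^ Suc k * y ^ (n - k) * q ^ T k" for k
    proof -
      have "T k = k + T (k - 1)" by (cases k) auto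
      then show ?thesis by (simp add: power_add power_mult_distrib algebra_simps)
    qed
    have "(y + z) * (\<Sum>k\<le>n. qb q n k * (z * q) ^ k * y ^ (n - k) * q ^ T (k - 1))
      = (\<Sum>k\<le>n. y * (qb q n k * (z * q) ^ k * y ^ (n - k) * q ^ T (k - 1)))
       + (\<Sum>k\<le>n. z * (qb q n k * (z * q) ^ k * y ^ (n - k) * q ^ T (k - 1)))"
      by (simp add: distrib_right sum_distrib_left sum.distrib)
    also have "(\<Sum>k\<le>n. y * (qb q n k * (z * q) ^ k * y ^ (n - k) * q ^ T (k - 1)))
       = (\<Sum>k\<le>n. qb q n k * z ^ k * y ^ (Suc n - k) * q ^ (k + T (k - 1)))"
      by (rule sum.cong[OF refl], rule a, simp)
    also have "(\<Sum>k\<le>n. z * (qb q n k * (z * q) ^ k * y ^ (n - k) * q ^ T (k - 1)))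
       = (\<Sum>k\<le>n. qb q n k * z ^ Suc k * y ^ (n - k) * q ^ T k)"
      by (simp only: b)
    finally show ?thesis .
  qed
  also have "(\<Sum>k\<le>n. qb q n k * z ^ k * y ^ (Suc n - k) * q ^ (k + T (k - 1)))
      = y ^ Suc n + (\<Sum>k<n. qb q n (Suc k) * z ^ Suc k * y ^ (n - k) * q ^ (Suc k + T k))"
    unfolding lessThan_Suc_atMost[symmetric] by (subst sum.lessThan_Suc_shift) simp
  also have "(\<Sum>k<n. qb q n (Suc k) * z ^ Suc k * y ^ (n - k) * q ^ (Suc k + T k))
      = (\<Sum>k\<le>n. q ^ Suc k * qb q n (Suc k) * z ^ Suc k * y ^ (n - k) * q ^ T k)"
    by (simp add: lessThan_Suc_atMost[symmetric] qb_gt power_add algebra_simps)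
  finally have L: "(\<Prod>m<Suc n. (y + z * q ^ m)) = y ^ Suc n +
      ((\<Sum>k\<le>n. q ^ Suc k * qb q n (Suc k) * z ^ Suc k * y ^ (n - k) * q ^ T k)
      + (\<Sum>k\<le>n. qb q n k * z ^ Suc k * y ^ (n - k) * q ^ T k))"
    by (simp add: algebra_simps)
  have "(\<Sum>k\<le>Suc n. qb q (Suc n) k * z ^ k * y ^ (Suc n - k) * q ^ T (k - 1))
      = y ^ Suc n + (\<Sum>k\<le>n. qb q (Suc n) (Suc k) * z ^ Suc k * y ^ (n - k) * q ^ T k)"
    by (subst sum.atMost_Suc_shift) simp
  also have "\<dots> = y ^ Suc n +
      ((\<Sum>k\<le>n. q ^ Suc k * qb q n (Suc k) * z ^ Suc k * y ^ (n - k) * q ^ T k)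
      + (\<Sum>k\<le>n. qb q n k * z ^ Suc k * y ^ (n - k) * q ^ T k))"
    by (simp add: algebra_simps sum.distrib)
  finally show ?case using L by simp
qed




abbreviation X :: "int fps" where "X \<equiv> fps_X"

definition fc :: "nat \<Rightarrow> int fps \<Rightarrow> int fps \<Rightarrow> bool" where
  "fc M f g \<longleftrightarrow> (\<forall>i<M. f $ i = g $ i)"

lemma fc_refl[simp]: "fc M f f" by (simp add: fc_def)
lemma fc_sym: "fc M f g \<Longrightarrow> fc M g f" by (simp add: fc_def)
lemma fc_trans: "fc M f g \<Longrightarrow> fc M g h \<Longrightarrow> fc M f h" by (simp add: fc_def)
lemma fc_mono: "fc M f g \<Longrightarrow> M' \<le> M \<Longrightarrow> fc M' f g" by (simp add: fc_def)
lemma fc_add: "fc M f f' \<Longrightarrow> fc M g g' \<Longrightarrow> fc M (f + g) (f' + g')" by (simp add: fc_def)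
lemma fc_sum: "(\<And>k. k \<in> A \<Longrightarrow> fc M (f k) (g k)) \<Longrightarrow> fc M (sum f A) (sum g A)"
  by (simp add: fc_def fps_sum_nth)
lemma fc_mult: "fc M f f' \<Longrightarrow> fc M g g' \<Longrightarrow> fc M (f * g) (f' * g')"
  unfolding fc_def fps_mult_nth by auto
lemma fc_shift: "fc M f g \<Longrightarrow> fc (e + M) (X ^ e * f) (X ^ e * g)"
  unfolding fc_def fps_X_power_mult_nth by auto
lemma fc_Xpow: "M \<le> e \<Longrightarrow> fc M (X ^ e * f) 0"
  unfolding fc_def fps_X_power_mult_nth by auto
lemma fc_factor: "M \<le> e \<Longrightarrow> fc M (1 + s * X ^ e) 1"
  using fc_add[OF fc_refl[of M 1] fc_Xpow[of M e s]] by (simp add: mult.commute)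
lemma fc_factor': "M \<le> e \<Longrightarrow> fc M (1 - X ^ e) 1"
  using fc_factor[of M e "-1"] by simp

lemma fc_prod: fixes n :: nat shows "(\<And>i. i < n \<Longrightarrow> fc M (f i) (g i)) \<Longrightarrow> fc M (\<Prod>i<n. f i) (\<Prod>i<n. g i)"
  by (induction n) (auto intro: fc_mult)

lemma fc_prod_tail:
  fixes a b :: nat
  assumes "\<And>i. a \<le> i \<Longrightarrow> fc M (f i) 1" "a \<le> b"
  shows "fc M (\<Prod>i<b. f i) (\<Prod>i<a. f i)"
  using assms(2)
proof (induction b)
  case 0 then show ?case by simp
next
  case (Suc b)
  show ?case
  proof (cases "a = Suc b")
    case True then show ?thesis by simp
  next
    case False
    then have "a \<le> b" using Suc by simp
    then have "fc M ((\<Prod>i<b. f i) * f b) ((\<Prod>i<a. f i) * 1)"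
      using Suc assms(1) by (intro fc_mult) auto
    then show ?thesis by simp
  qed
qed

definition P :: "nat \<Rightarrow> int fps" where "P b = (\<Prod>i<b. (1 + X ^ Suc i))"
definition Q :: "nat \<Rightarrow> int fps" where "Q b = (\<Prod>i<b. (1 - X ^ Suc i))"

lemma P_tail: assumes "a \<le> b" shows "fc (Suc a) (P b) (P a)"
proof -
  have h: "fc (Suc a) (1 + X ^ Suc i) 1" if "a \<le> i" for i
    using fc_factor[of "Suc a" "Suc i" 1] that by simp
  show ?thesis unfolding P_def by (rule fc_prod_tail[OF h assms])
qed

lemma Q_tail: assumes "a \<le> b" shows "fc (Suc a) (Q b) (Q a)"
proof -
  have h: "fc (Suc a) (1 - X ^ Suc i) 1" if "a \<le> i" for i
    using fc_factor'[of "Suc a" "Suc i"] that by simp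
  show ?thesis unfolding Q_def by (rule fc_prod_tail[OF h assms])
qed

lemma qbQ:
  assumes "k \<le> n"
  shows "fc (Suc (min L (min k (n - k)))) (qb X n k * Q L) 1"
proof -
  define a where "a = min L k"
  have "fc (Suc a) (Q L) (Q a)" using Q_tail a_def by simp
  moreover have "fc (Suc a) (Q k) (Q a)" using Q_tail a_def by simp
  ultimately have "fc (Suc a) (Q L) (Q k)" by (meson fc_sym fc_trans)
  then have 1: "fc (Suc a) (qb X n k * Q L) (qb X n k * Q k)" by (intro fc_mult) auto
  have 2: "qb X n k * Q k = (\<Prod>i<k. (1 - X ^ (n - i)))" unfolding Q_def by (rule qb_R)
  have 3: "fc (Suc (n - k)) (\<Prod>i<k. (1 - X ^ (n - i))) (\<Prod>i<k. 1)"
    using assms by (intro fc_prod fc_factor') auto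
  show ?thesis using 1 2 3 unfolding a_def
    by (simp add: fc_def)
qed

lemma T_add_pred: "T (x + y - 1) = T (x - 1) + T (y - 1) + x * y"
proof (induction y)
  case 0 then show ?case by simp
next
  case (Suc y)
  have "T (x + Suc y - 1) = T (Suc (x + y) - 1)" by simp
  also have "\<dots> = T (x + y - 1) + (x + y)" by (rule T_pred_Suc)
  finally show ?case using Suc T_pred_Suc[of y] by (simp add: algebra_simps)
qed

lemma T_pred2: "T (a - 1) + T (a - 1) + a = a * a"
proof (cases a)
  case (Suc m) then show ?thesis using T2[of m] by (simp add: algebra_simps)
qed simp

lemma T_eq_pred: "T a = T (a - 1) + a"
  by (metis T_pred_Suc diff_Suc_1)

lemma sum_lessThan_id: "(\<Sum>m<N. m) = T (N - 1)"
proof (induction N)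
  case (Suc N) then show ?case using T_eq_pred[of N] by simp
qed simp

lemma E1:
  assumes "a \<le> N"
  shows "N * (2 * N + 1 - (N - a)) + T (N - a - 1) = T (N - 1) + N + N * N + T a"
proof -
  obtain d where N: "N = a + d" using assms le_Suc_ex by blast
  have "N - a - 1 = d - 1" using N by simp
  moreover have "2 * N + 1 - (N - a) = 2 * a + d + 1" using N by simp
  moreover have "T (N - 1) = T (a - 1) + T (d - 1) + a * d" using N T_add_pred by simp
  moreover have "T a = T (a - 1) + a" by (rule T_eq_pred)
  ultimately show ?thesis using T_pred2[of a] N by (simp add: algebra_simps)
qed

lemma E2:
  assumes "b \<le> N"
  shows "N * (2 * N + 1 - (Suc N + b)) + T (Suc N + b - 1) = T (N - 1) + N + N * N + T b"
proof -
  obtain d where N: "N = b + d" using assms le_Suc_ex by blast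
  have "2 * N + 1 - (Suc N + b) = d" using N by simp
  moreover have "T (Suc N + b - 1) = T (N + Suc b - 1)" by simp
  moreover have "T (N + Suc b - 1) = T (N - 1) + T b + N * Suc b" using T_add_pred[of N "Suc b"] by simp
  moreover have "T b = T (b - 1) + b" by (rule T_eq_pred)
  ultimately show ?thesis using N by (simp add: algebra_simps)
qed




lemma prod_lessThan_add: "(\<Prod>i<m+n. f i) = (\<Prod>i<m. f i) * (\<Prod>i<n. f (m + i))"
  for f :: "nat \<Rightarrow> 'a::comm_monoid_mult"
  by (induction n) (simp_all add: mult.assoc)

lemma sum_lessThan_add: "(\<Sum>i<m+n. f i) = (\<Sum>i<m. f i) + (\<Sum>i<n. f (m + i))"
  for f :: "nat \<Rightarrow> 'a::comm_monoid_add"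
  by (induction n) (simp_all add: add.assoc)

lemma X_cancel:
  assumes "X ^ c * f = X ^ c * g" shows "f = g"
proof (rule fps_ext)
  fix n
  have "(X ^ c * f) $ (n + c) = (X ^ c * g) $ (n + c)" using assms by simp
  then show "f $ n = g $ n" by (simp add: fps_X_power_mult_nth)
qed

lemma lhs_factor:
  "(\<Prod>m<2*N+1. (X ^ N + X ^ m)) = X ^ (T (N - 1) + N + N * N) * (P N * P N + P N * P N)"
proof -
  define g where "g m = X ^ N + X ^ m" for m
  have "(\<Prod>m<2*N+1. (X ^ N + X ^ m)) = (\<Prod>m<N + Suc N. g m)"
    unfolding g_def by (simp add: mult_2)
  also have "\<dots> = (\<Prod>m<N. g m) * (g N * (\<Prod>i<N. g (N + Suc i)))"
    by (subst prod_lessThan_add, subst prod.lessThan_Suc_shift, simp only: add_0_right)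
  also have "(\<Prod>i<N. g (N + Suc i)) = (\<Prod>i<N. X ^ N * (1 + X ^ Suc i))"
    unfolding g_def by (simp add: power_add algebra_simps)
  also have "\<dots> = X ^ (N * N) * P N"
    unfolding P_def by (simp add: prod.distrib power_mult)
  also have "(\<Prod>m<N. g m) = (\<Prod>m<N. X ^ m * (1 + X ^ (N - m)))"
  proof (rule prod.cong[OF refl])
    fix m assume "m \<in> {..<N}"
    then have "X ^ m * X ^ (N - m) = X ^ N" by (simp add: power_add[symmetric])
    then show "g m = X ^ m * (1 + X ^ (N - m))" unfolding g_def by (simp add: algebra_simps)
  qed
  also have "\<dots> = X ^ (\<Sum>m<N. m) * (\<Prod>m<N. (1 + X ^ (N - m)))"
    by (simp add: prod.distrib power_sum)
  also have "(\<Prod>m<N. (1 + X ^ (N - m))) = (\<Prod>m<N. (\<lambda>i. 1 + X ^ Suc i) (N - Suc m))"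
    by (rule prod.cong[OF refl]) (simp add: Suc_diff_Suc)
  also have "\<dots> = P N" unfolding P_def by (rule prod.nat_diff_reindex)
  finally show ?thesis
    unfolding g_def sum_lessThan_id by (simp add: power_add algebra_simps)
qed

lemma gauss_exact:
  "P N * P N + P N * P N =
   (\<Sum>a<Suc N. qb X (2*N+1) (N - a) * X ^ T a) + (\<Sum>b<Suc N. qb X (2*N+1) (Suc N + b) * X ^ T b)"
proof (rule X_cancel[of "T (N - 1) + N + N * N"])
  define c where "c = T (N - 1) + N + N * N"
  define h where "h k = qb X (2*N+1) k * X ^ (N * (2*N+1-k) + T (k - 1))" for k
  have "X ^ c * (P N * P N + P N * P N) = (\<Prod>m<2*N+1. (X ^ N + X ^ m))"
    using lhs_factor c_def by simp
  also have "\<dots> = (\<Prod>m<2*N+1. (X ^ N + 1 * X ^ m))" by simp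
  also have "\<dots> = (\<Sum>k\<le>2*N+1. qb X (2*N+1) k * 1 ^ k * (X ^ N) ^ (2*N+1 - k) * X ^ T (k - 1))"
    by (rule qbin_thm)
  also have "\<dots> = (\<Sum>k\<le>2*N+1. h k)"
    by (rule sum.cong[OF refl]) (simp add: h_def power_mult power_add)
  also have "\<dots> = (\<Sum>k<Suc N + Suc N. h k)"
    by (simp add: lessThan_Suc_atMost[symmetric] mult_2)
  also have "\<dots> = (\<Sum>k<Suc N. h k) + (\<Sum>b<Suc N. h (Suc N + b))"
    by (rule sum_lessThan_add)
  also have "(\<Sum>k<Suc N. h k) = (\<Sum>a<Suc N. h (Suc N - Suc a))"
    by (rule sum.nat_diff_reindex[symmetric])
  also have "\<dots> = (\<Sum>a<Suc N. X ^ c * (qb X (2*N+1) (N - a) * X ^ T a))"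
  proof (rule sum.cong[OF refl])
    fix a assume "a \<in> {..<Suc N}"
    then have "a \<le> N" by simp
    then show "h (Suc N - Suc a) = X ^ c * (qb X (2*N+1) (N - a) * X ^ T a)"
      unfolding h_def c_def using E1[of a N] by (simp add: power_add[symmetric] algebra_simps)
  qed
  also have "(\<Sum>b<Suc N. h (Suc N + b)) = (\<Sum>b<Suc N. X ^ c * (qb X (2*N+1) (Suc N + b) * X ^ T b))"
  proof (rule sum.cong[OF refl])
    fix b assume "b \<in> {..<Suc N}"
    then have "b \<le> N" by simp
    then show "h (Suc N + b) = X ^ c * (qb X (2*N+1) (Suc N + b) * X ^ T b)"
    proof -
      have e: "N * (2*N+1 - (Suc N + b)) + T (Suc N + b - 1) = c + T b" using E2[of b N] \<open>b \<le> N\<close> c_def by simp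
      show ?thesis unfolding h_def e power_add by (simp only: ac_simps)
    qed
  qed
  finally show "X ^ (T (N - 1) + N + N * N) * (P N * P N + P N * P N) =
    X ^ (T (N - 1) + N + N * N) * ((\<Sum>a<Suc N. qb X (2*N+1) (N - a) * X ^ T a) +
      (\<Sum>b<Suc N. qb X (2*N+1) (Suc N + b) * X ^ T b))"
    unfolding c_def by (simp add: sum_distrib_left distrib_left)
qed

lemma T_ge: "a \<le> T a"
  by (induction a) auto

definition tri :: "nat \<Rightarrow> int fps" where "tri N = (\<Sum>a<Suc N. X ^ T a)"

lemma gauss_cong: "fc (Suc N) (P N * P N * Q N) (tri N)"
proof -
  have t1: "fc (Suc N) (qb X (2*N+1) (N - a) * X ^ T a * Q N) (X ^ T a)" if "a < Suc N" for a
  proof -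
    have "fc (Suc (min N (min (N - a) (2*N+1 - (N - a))))) (qb X (2*N+1) (N - a) * Q N) 1"
      by (rule qbQ) simp
    then have "fc (Suc (N - a)) (qb X (2*N+1) (N - a) * Q N) 1" using that by simp
    then have "fc (T a + Suc (N - a)) (X ^ T a * (qb X (2*N+1) (N - a) * Q N)) (X ^ T a * 1)"
      by (rule fc_shift)
    then show ?thesis using that T_ge[of a] by (auto simp: ac_simps elim!: fc_mono)
  qed
  have t2: "fc (Suc N) (qb X (2*N+1) (Suc N + b) * X ^ T b * Q N) (X ^ T b)" if "b < Suc N" for b
  proof -
    have "fc (Suc (min N (min (Suc N + b) (2*N+1 - (Suc N + b))))) (qb X (2*N+1) (Suc N + b) * Q N) 1"
      using that by (intro qbQ) simp
    then have "fc (Suc (N - b)) (qb X (2*N+1) (Suc N + b) * Q N) 1" using that by simp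
    then have "fc (T b + Suc (N - b)) (X ^ T b * (qb X (2*N+1) (Suc N + b) * Q N)) (X ^ T b * 1)"
      by (rule fc_shift)
    then show ?thesis using that T_ge[of b] by (auto simp: ac_simps elim!: fc_mono)
  qed
  have s1: "fc (Suc N) (\<Sum>a<Suc N. qb X (2*N+1) (N - a) * X ^ T a * Q N) (\<Sum>a<Suc N. X ^ T a)"
    by (rule fc_sum) (rule t1, simp)
  have s2: "fc (Suc N) (\<Sum>a<Suc N. qb X (2*N+1) (Suc N + a) * X ^ T a * Q N) (\<Sum>a<Suc N. X ^ T a)"
    by (rule fc_sum) (rule t2, simp)
  have "fc (Suc N) ((P N * P N + P N * P N) * Q N) (tri N + tri N)"
    unfolding gauss_exact tri_def distrib_right sum_distrib_right
    by (rule fc_add[OF s1 s2])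
  then have "\<forall>i<Suc N. (P N * P N * Q N) $ i + (P N * P N * Q N) $ i = tri N $ i + tri N $ i"
    unfolding fc_def by (simp only: distrib_right fps_add_nth)
  then show ?thesis unfolding fc_def by auto
qed




definition F :: "nat \<Rightarrow> int fps" where "F N = (\<Prod>i<N. (1 + X ^ (2 * i + 1)))"
definition E4 :: "nat \<Rightarrow> int fps" where "E4 N = (\<Prod>i<N. (1 - (X ^ 4) ^ Suc i))"

lemma key_factor:
  "(1 + X ^ Suc (Suc (2 * N))) * ((1 + X ^ Suc N) * (1 - X ^ Suc N)) = 1 - (X ^ 4) ^ Suc N"
proof -
  define u where "u = X ^ Suc N"
  have e1: "Suc (Suc (2 * N)) = Suc N * 2" by simp
  have 1: "X ^ Suc (Suc (2 * N)) = u ^ 2" unfolding u_def e1 by (rule power_mult)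
  have e2: "4 * Suc N = Suc N * 4" by simp
  have 2: "(X ^ 4) ^ Suc N = u ^ 4" unfolding u_def power_mult[symmetric] e2 by simp
  show ?thesis unfolding 1 2 u_def[symmetric] by (simp add: algebra_simps power2_eq_square power4_eq_xxxx)
qed

lemma FE4: "F N * E4 N = P (2 * N) * P N * Q N"
proof (induction N)
  case 0 then show ?case by (simp add: F_def E4_def P_def Q_def)
next
  case (Suc N)
  have "F (Suc N) * E4 (Suc N) = (F N * E4 N) * (1 + X ^ (2 * N + 1)) * (1 - (X ^ 4) ^ Suc N)"
    unfolding F_def E4_def by (simp add: ac_simps)
  also have "\<dots> = P (2 * N) * P N * Q N * (1 + X ^ (2 * N + 1)) *
      ((1 + X ^ Suc (Suc (2 * N))) * ((1 + X ^ Suc N) * (1 - X ^ Suc N)))"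
    unfolding Suc.IH key_factor ..
  also have "\<dots> = P (2 * Suc N) * P (Suc N) * Q (Suc N)"
    unfolding P_def Q_def by (simp add: ac_simps)
  finally show ?case .
qed

lemma R0_E4: "R x N 0 = (\<Prod>i<N. (1 - x ^ Suc i))"
proof (induction N)
  case 0 then show ?case by (simp add: R_def)
next
  case (Suc N) then show ?case using R_Suc[of 0 N x] by simp
qed

lemma S_cong: "fc (Suc N) (S (X ^ 4) N) (E4 N)"
proof -
  have "fc (Suc N) (S (X ^ 4) N) (\<Sum>k\<le>N. if k = 0 then R (X ^ 4) N 0 else 0)"
    unfolding S_def
  proof (rule fc_sum)
    fix k assume "k \<in> {..N}"
    show "fc (Suc N) ((-1) ^ k * (X ^ 4) ^ (N * k + T k) * R (X ^ 4) N k)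
        (if k = 0 then R (X ^ 4) N 0 else 0)"
    proof (cases "k = 0")
      case True then show ?thesis by simp
    next
      case False
      then have h1: "N \<le> N * k" by simp
      have h2: "1 \<le> T k" using T_ge[of k] False by simp
      have le: "Suc N \<le> 4 * (N * k + T k)" unfolding distrib_left using h1 h2 by linarith
      have "(-1) ^ k * (X ^ 4) ^ (N * k + T k) * R (X ^ 4) N k
          = X ^ (4 * (N * k + T k)) * ((-1) ^ k * R (X ^ 4) N k)"
        by (simp only: power_mult[symmetric] ac_simps)
      then show ?thesis unfolding if_not_P[OF False] by (simp only: fc_Xpow[OF le])
    qed
  qed
  then show ?thesis by (simp add: R0_E4 E4_def)
qed

lemma main_cong: "fc (Suc N) (F N * pent (X ^ 4) N) (tri N)"
proof -
  have "fc (Suc N) (F N * pent (X ^ 4) N) (F N * E4 N)"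
    using S_cong[of N] unfolding shanks by (intro fc_mult) auto
  moreover have "fc (Suc N) (P (2 * N) * P N * Q N) (P N * P N * Q N)"
    using P_tail[of N "2 * N"] by (intro fc_mult) auto
  ultimately show ?thesis using gauss_cong[of N] FE4[of N] by (metis fc_trans)
qed




lemma coef_prod:
  fixes N :: nat and g :: "nat \<Rightarrow> nat"
  shows "(\<Prod>i<N. (1 + X ^ g i)) $ m = int (card {S. S \<subseteq> {..<N} \<and> (\<Sum>i\<in>S. g i) = m})"
proof (induction N arbitrary: m)
  case 0
  have "{S. S \<subseteq> {..<0::nat} \<and> (\<Sum>i\<in>S. g i) = m} = (if m = 0 then {{}} else {})" by auto
  then show ?case by simp
next
  case (Suc N)
  define A where "A m = {S. S \<subseteq> {..<N} \<and> (\<Sum>i\<in>S. g i) = m}" for m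
  define B where "B = {S. S \<subseteq> {..<N} \<and> (\<Sum>i\<in>S. g i) + g N = m}"
  have finA: "finite (A m)" unfolding A_def
    by (rule finite_subset[of _ "Pow {..<N}"]) auto
  have finB: "finite B" unfolding B_def
    by (rule finite_subset[of _ "Pow {..<N}"]) auto
  have split: "{S. S \<subseteq> {..<Suc N} \<and> (\<Sum>i\<in>S. g i) = m} = A m \<union> insert N ` B"
  proof (rule set_eqI, rule iffI)
    fix S assume S: "S \<in> {S. S \<subseteq> {..<Suc N} \<and> (\<Sum>i\<in>S. g i) = m}"
    then have fin: "finite S" by (auto intro: finite_subset[of _ "{..<Suc N}"])
    show "S \<in> A m \<union> insert N ` B"
    proof (cases "N \<in> S")
      case True
      have "S = insert N (S - {N})" using True by auto
      moreover have "S - {N} \<in> B"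
        using S True fin unfolding B_def by (auto simp: sum.remove less_Suc_eq)
      ultimately show ?thesis by blast
    next
      case False
      then show ?thesis using S unfolding A_def by (auto simp: less_Suc_eq)
    qed
  next
    fix S assume "S \<in> A m \<union> insert N ` B"
    then show "S \<in> {S. S \<subseteq> {..<Suc N} \<and> (\<Sum>i\<in>S. g i) = m}"
    proof
      assume "S \<in> A m" then show ?thesis unfolding A_def by auto
    next
      assume "S \<in> insert N ` B"
      then obtain S' where S': "S' \<in> B" "S = insert N S'" by blast
      then have "finite S'" "N \<notin> S'" unfolding B_def
        by (auto intro: finite_subset[of _ "{..<N}"])
      then show ?thesis using S' unfolding B_def by auto
    qed
  qed
  have disj: "A m \<inter> insert N ` B = {}" unfolding A_def by auto
  have inj: "inj_on (insert N) B" unfolding B_def inj_on_def by auto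
  have cardB: "card B = (if g N \<le> m then card (A (m - g N)) else 0)"
  proof (cases "g N \<le> m")
    case True
    then have "B = A (m - g N)" unfolding A_def B_def by auto
    then show ?thesis using True by simp
  next
    case False
    then have "B = {}" unfolding B_def by auto
    then show ?thesis using False by simp
  qed
  have "(\<Prod>i<Suc N. (1 + X ^ g i)) $ m = (\<Prod>i<N. (1 + X ^ g i)) $ m + ((\<Prod>i<N. (1 + X ^ g i)) * X ^ g N) $ m"
    by (simp add: distrib_left)
  also have "\<dots> = int (card (A m)) + (if m < g N then 0 else int (card (A (m - g N))))"
    unfolding fps_X_power_mult_right_nth Suc.IH A_def by simp
  also have "\<dots> = int (card (A m \<union> insert N ` B))"
    using finA finB disj inj cardB by (simp add: card_Un_disjoint card_image)
  finally show ?case using split by simp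
qed

lemma F_coef:
  assumes "m \<le> N"
  shows "F N $ m = int (qq (int m))"
proof -
  define f where "f i = 2 * i + 1" for i :: nat
  have injf: "inj f" unfolding f_def inj_def by auto
  have 1: "F N $ m = int (card {S. S \<subseteq> {..<N} \<and> (\<Sum>i\<in>S. f i) = m})"
    unfolding F_def f_def by (rule coef_prod)
  have img: "image f ` {S. S \<subseteq> {..<N} \<and> (\<Sum>i\<in>S. f i) = m}
      = {S :: nat set. finite S \<and> (\<forall>k\<in>S. odd k) \<and> int (\<Sum>S) = int m}"
  proof (rule set_eqI, rule iffI)
    fix S' assume "S' \<in> image f ` {S. S \<subseteq> {..<N} \<and> (\<Sum>i\<in>S. f i) = m}"
    then obtain S where S: "S \<subseteq> {..<N}" "(\<Sum>i\<in>S. f i) = m" "S' = f ` S" by blast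
    have "\<Sum>S' = (\<Sum>i\<in>S. f i)" using S(3) injf by (simp add: sum.reindex inj_on_subset)
    moreover have "finite S" using S(1) finite_subset by blast
    ultimately show "S' \<in> {S :: nat set. finite S \<and> (\<forall>k\<in>S. odd k) \<and> int (\<Sum>S) = int m}"
      using S unfolding f_def by auto
  next
    fix S' assume S': "S' \<in> {S :: nat set. finite S \<and> (\<forall>k\<in>S. odd k) \<and> int (\<Sum>S) = int m}"
    define S where "S = {i. f i \<in> S'}"
    have "int (\<Sum>S') = int m" using S' by blast
    then have sumS': "\<Sum>S' = m" by (simp only: of_nat_eq_iff)
    have eq: "S' = f ` S"
    proof (rule set_eqI, rule iffI)
      fix k assume "k \<in> S'"
      then have "odd k" using S' by auto
      define i where "i = (k - 1) div 2"
      have ki: "k = f i" using \<open>odd k\<close> unfolding f_def i_def by presburger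
      then have "i \<in> S" using \<open>k \<in> S'\<close> S_def by simp
      then show "k \<in> f ` S" using ki by blast
    qed (auto simp: S_def)
    have le: "k \<le> m" if "k \<in> S'" for k
    proof -
      have "k \<le> \<Sum>S'" using S' that by (intro member_le_sum) auto
      then show ?thesis using sumS' by simp
    qed
    have "S \<subseteq> {..<N}"
    proof
      fix i assume "i \<in> S"
      then have "f i \<le> m" using le S_def by auto
      then show "i \<in> {..<N}" using assms unfolding f_def by simp
    qed
    moreover have "(\<Sum>i\<in>S. f i) = m"
    proof -
      have "\<Sum>(f ` S) = (\<Sum>i\<in>S. f i)"
        using sum.reindex[OF inj_on_subset[OF injf subset_UNIV], of id] by simp
      then show ?thesis using sumS' eq by simp
    qed
    ultimately show "S' \<in> image f ` {S. S \<subseteq> {..<N} \<and> (\<Sum>i\<in>S. f i) = m}"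
      using eq by blast
  qed
  have "card (image f ` {S. S \<subseteq> {..<N} \<and> (\<Sum>i\<in>S. f i) = m})
      = card {S. S \<subseteq> {..<N} \<and> (\<Sum>i\<in>S. f i) = m}"
    by (rule card_image) (unfold inj_on_def, use inj_image_eq_iff[OF injf] in blast)
  then show ?thesis using 1 img unfolding qq_def by simp
qed




lemma T_strict: "strict_mono T"
  unfolding strict_mono_Suc_iff by simp

lemma T_div: "T k = k * (k + 1) div 2"
  using T2[of k] by simp

lemma tri_coef: "tri N $ N = (if triangular (int N) then 1 else 0)"
proof -
  have tr: "triangular (int N) \<longleftrightarrow> (\<exists>k. T k = N)"
    unfolding triangular_def T_div by auto
  have "tri N $ N = (\<Sum>a<Suc N. (if N = T a then 1 else 0))"
    unfolding tri_def fps_sum_nth by simp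
  show ?thesis
  proof (cases "\<exists>k. T k = N")
    case True
    then obtain k where k: "T k = N" by blast
    have kle: "k < Suc N" using T_ge[of k] k by simp
    have "(\<Sum>a<Suc N. (if N = T a then 1 else 0 :: int)) = (\<Sum>a<Suc N. (if a = k then 1 else 0))"
      by (rule sum.cong[OF refl]) (use k strict_mono_eq[OF T_strict] in auto)
    also have "\<dots> = 1" using kle by simp
    finally show ?thesis using \<open>tri N $ N = _\<close> tr True by simp
  next
    case False
    have "(\<Sum>a<Suc N. (if N = T a then 1 else 0 :: int)) = 0"
      by (rule sum.neutral) (use False in auto)
    then show ?thesis using \<open>tri N $ N = _\<close> tr False by simp
  qed
qed

lemma XF_coef: "(X ^ e * F N) $ N = int (qq (int N - int e))"
proof (cases "N < e")
  case True then show ?thesis by (simp add: fps_X_power_mult_nth qq_def)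
next
  case False
  then have "(X ^ e * F N) $ N = F N $ (N - e)" by (simp add: fps_X_power_mult_nth)
  also have "\<dots> = int (qq (int (N - e)))" by (rule F_coef) simp
  finally show ?thesis using False by (simp add: of_nat_diff)
qed

lemma neg1_pow: "((-1 :: int fps) ^ j) = fps_const ((-1) ^ j)"
  by (simp flip: fps_const_power fps_const_neg)

lemma term_coef:
  "(F N * ((-1) ^ j * ((X ^ 4) ^ p + (X ^ 4) ^ r))) $ N =
   (-1) ^ j * ((X ^ (4 * p) * F N) $ N + (X ^ (4 * r) * F N) $ N)"
proof -
  have "F N * ((-1) ^ j * ((X ^ 4) ^ p + (X ^ 4) ^ r)) =
     fps_const ((-1) ^ j) * (X ^ (4 * p) * F N + X ^ (4 * r) * F N)"
    unfolding neg1_pow power_mult by (simp add: algebra_simps)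
  then show ?thesis by simp
qed

lemma A_int: "1 \<le> j \<Longrightarrow> int (4 * (j * j + T (j - 1))) = 2 * int j * (3 * int j - 1)"
proof -
  assume "1 \<le> j"
  then obtain m where j: "j = Suc m" by (cases j) auto
  have h: "2 * int (T m) = int m * (int m + 1)" using T2[of m] by (metis of_nat_1 of_nat_add of_nat_mult of_nat_numeral)
  show ?thesis unfolding j using h by (simp add: algebra_simps)
qed

lemma B_int: "int (4 * (j * j + T j)) = 2 * int j * (3 * int j + 1)"
proof -
  have h: "2 * int (T j) = int j * (int j + 1)" using T2[of j] by (metis of_nat_1 of_nat_add of_nat_mult of_nat_numeral)
  show ?thesis using h by (simp add: algebra_simps)
qed

theorem theorem5:
  fixes n :: int
  assumes "n \<ge> 1"
  shows "int (qq n) + (\<Sum>j\<in>{1..n}. (-1) ^ nat j *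
            (int (qq (n - 2*j*(3*j - 1))) + int (qq (n - 2*j*(3*j + 1)))))
         = (if triangular n then 1 else 0)"
proof -
  define N where "N = nat n"
  have n: "n = int N" using assms N_def by simp
  have "(F N * pent (X ^ 4) N) $ N = tri N $ N"
    using main_cong[of N] unfolding fc_def by simp
  also have "tri N $ N = (if triangular n then 1 else 0)" using tri_coef n by simp
  finally have 1: "(F N * pent (X ^ 4) N) $ N = (if triangular n then 1 else 0)" .
  have "(F N * pent (X ^ 4) N) $ N = F N $ N +
      (\<Sum>j\<in>{1..N}. (F N * ((-1) ^ j * ((X ^ 4) ^ (j * j + T (j - 1)) + (X ^ 4) ^ (j * j + T j)))) $ N)"
    unfolding pent_def distrib_left sum_distrib_left by (simp add: fps_sum_nth)
  also have "\<dots> = int (qq n) + (\<Sum>j\<in>{1..N}. (-1) ^ j *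
      (int (qq (n - 2 * int j * (3 * int j - 1))) + int (qq (n - 2 * int j * (3 * int j + 1)))))"
  proof -
    have "F N $ N = int (qq n)" using F_coef[of N N] n by simp
    moreover have "(F N * ((-1) ^ j * ((X ^ 4) ^ (j * j + T (j - 1)) + (X ^ 4) ^ (j * j + T j)))) $ N
        = (-1) ^ j * (int (qq (n - 2 * int j * (3 * int j - 1))) + int (qq (n - 2 * int j * (3 * int j + 1))))"
      if "j \<in> {1..N}" for j
      unfolding term_coef XF_coef using A_int[of j] B_int[of j] that n by simp
    ultimately show ?thesis by simp
  qed
  also have "(\<Sum>j\<in>{1..N}. (-1) ^ j *
      (int (qq (n - 2 * int j * (3 * int j - 1))) + int (qq (n - 2 * int j * (3 * int j + 1)))))
    = (\<Sum>j\<in>{1..n}. (-1) ^ nat j *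
            (int (qq (n - 2*j*(3*j - 1))) + int (qq (n - 2*j*(3*j + 1)))))"
  proof -
    have "{1..n} = int ` {1..N}" using n by (simp add: image_int_atLeastAtMost)
    then show ?thesis by (simp add: sum.reindex)
  qed
  finally show ?thesis using 1 by simp
qed


end
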